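(* Consider a two-user multiple-access network (users $A$ and $B$) with saturated traffic running slotted Aloha. Time is divided into slots of duration $T_\text{slot}$, equal to the common packet duration. In each slot, user $A$ transmits with probability $p_A$ and user $B$ with probability $p_B$, independently of each other and across slots. A slot is a successful channel access by a user exactly when that user is the only one transmitting. Then the channel cycle time of slotted Aloha is $$\Psi_\text{slotted-Aloha} = \frac{(1-p_A)p_B+(1-p_B)p_A}{(1-p_A)(1-p_B)p_Ap_B}\cdot T_\text{slot}.$$
   Context: Consider a multiple-access network with $N$ users sharing a channel. For times $t<t'$, let $M_n(t,t')$ denote the number of successful channel accesses of user $n$ between $t$ and $t'$. A moment is a refresh moment of user $i$ if and only if two conditions hold: a successful channel access of user $i$ ends at this moment, and the next successful channel access belongs to another user. The cycle time $\Gamma_i$ of user $i$ is the random variable defined as follows. Take two refresh moments $t_0<t_1$ of user $i$. - If they are consecutive refresh moments of user $i$, then $t_1-t_0$ is a cycle time of user $i$ iff $\min_n M_n(t_0,t_1)>0$. - If they are not consecutive, then $t_1-t_0$ is a cycle time iff $\min_n M_n(t_0,t_1)>0$ and $\min_n M_n(t_0,t')=0$, where $t'$ (with $t_0<t'<t_1$) is the refresh moment of user $i$ closest to $t_1$. In words, a cycle time is the duration between two closest refresh moments of user $i$ during which every other user has successfully accessed the channel at least once. The channel cycle time is $\Psi = \frac1N\sum_{n=1}^N \mathbb{E}[\Gamma_n]$. Here $N=2$. *)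

theory Defs
  imports "HOL-Probability.Probability"
begin

datatype user = UA | UB

definition slot_pmf :: "real \<Rightarrow> real \<Rightarrow> (bool \<times> bool) pmf" where
  "slot_pmf pA pB = pair_pmf (bernoulli_pmf pA) (bernoulli_pmf pB)"

definition aloha_space :: "real \<Rightarrow> real \<Rightarrow> (bool \<times> bool) stream measure" where
  "aloha_space pA pB = stream_space (measure_pmf (slot_pmf pA pB))"

definition tx :: "(bool \<times> bool) stream \<Rightarrow> user \<Rightarrow> nat \<Rightarrow> bool" where
  "tx \<omega> u n = (case u of UA \<Rightarrow> fst (\<omega> !! n) | UB \<Rightarrow> snd (\<omega> !! n))"

definition succ :: "(bool \<times> bool) stream \<Rightarrow> user \<Rightarrow> nat \<Rightarrow> bool" where
  "succ \<omega> u n \<longleftrightarrow> tx \<omega> u n \<and> (\<forall>v. v \<noteq> u \<longrightarrow> \<not> tx \<omega> v n)"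

text \<open>Moments are ends of slots: index k stands for the moment (k+1) * T_slot.
  M_n(t_k, t_k') = number of successful accesses of v in slots k+1 .. k'.\<close>
definition M :: "(bool \<times> bool) stream \<Rightarrow> user \<Rightarrow> nat \<Rightarrow> nat \<Rightarrow> nat" where
  "M \<omega> v k k' = card {j. k < j \<and> j \<le> k' \<and> succ \<omega> v j}"

definition refresh :: "(bool \<times> bool) stream \<Rightarrow> user \<Rightarrow> nat \<Rightarrow> bool" where
  "refresh \<omega> u k \<longleftrightarrow> succ \<omega> u k \<and>
     (\<exists>m>k. (\<exists>v. succ \<omega> v m) \<and> (\<forall>j. k < j \<and> j < m \<longrightarrow> \<not> (\<exists>v. succ \<omega> v j)) \<and> \<not> succ \<omega> u m)"

definition is_cycle :: "(bool \<times> bool) stream \<Rightarrow> user \<Rightarrow> nat \<Rightarrow> nat \<Rightarrow> bool" where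
  "is_cycle \<omega> u k0 k1 \<longleftrightarrow> refresh \<omega> u k0 \<and> refresh \<omega> u k1 \<and> k0 < k1 \<and>
     ( ((\<forall>k'. k0 < k' \<and> k' < k1 \<longrightarrow> \<not> refresh \<omega> u k') \<and> (\<forall>v. M \<omega> v k0 k1 > 0))
     \<or> (\<exists>k'. k0 < k' \<and> k' < k1 \<and> refresh \<omega> u k' \<and>
           (\<forall>k''. k' < k'' \<and> k'' < k1 \<longrightarrow> \<not> refresh \<omega> u k'') \<and>
           (\<forall>v. M \<omega> v k0 k1 > 0) \<and> (\<exists>v. M \<omega> v k0 k' = 0)))"

text \<open>Cycle time random variable of u: the cycle starting at the first refresh moment of u
  (cycles are i.i.d. here, so this is the typical cycle), in units of T_slot.\<close>
definition first_refresh :: "(bool \<times> bool) stream \<Rightarrow> user \<Rightarrow> nat" where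
  "first_refresh \<omega> u = (LEAST k. refresh \<omega> u k)"

definition cycle_time :: "real \<Rightarrow> (bool \<times> bool) stream \<Rightarrow> user \<Rightarrow> real" where
  "cycle_time T \<omega> u =
     T * real ((LEAST k1. is_cycle \<omega> u (first_refresh \<omega> u) k1) - first_refresh \<omega> u)"

definition channel_cycle_time :: "real \<Rightarrow> real \<Rightarrow> real \<Rightarrow> real" where
  "channel_cycle_time pA pB T =
     (\<Sum>u\<in>(UNIV :: user set). \<integral>\<omega>. cycle_time T \<omega> u \<partial>aloha_space pA pB)
       / real (card (UNIV :: user set))"

end

theory Submission
  imports Defs
begin


abbreviation SS :: "(bool\<times>bool) pmf \<Rightarrow> (bool\<times>bool) stream measure" where
  "SS P \<equiv> stream_space (measure_pmf P)"

lemma sets_S: "sets (SS P) = sets (stream_space (count_space UNIV))"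
  by (rule sets_stream_space_cong) simp

lemma space_SS[simp]: "space (SS P) = UNIV"
  by (simp add: space_stream_space)

lemma prob_SS: "prob_space (SS P)"
  by (rule prob_space.prob_space_stream_space) (rule prob_space_measure_pmf)

lemma emeasure_SS_UNIV[simp]: "emeasure (SS P) UNIV = 1"
  using prob_space.emeasure_space_1[OF prob_SS, of P] by simp

lemma meas_stake_S: "stake n \<in> measurable (SS P) (count_space UNIV)"
  using measurable_stake[where i=n, where 'a="bool\<times>bool"] 
  by (subst measurable_cong_sets[OF sets_S refl]) 

lemma meas_G_stake:
  assumes "\<And>x. G x \<in> space N"
  shows "(\<lambda>\<omega>. G (stake n \<omega>)) \<in> measurable (SS P) N"
proof -
  have "G \<in> measurable (count_space UNIV) N" using assms by auto
  from measurable_compose[OF meas_stake_S this] show ?thesis by (simp add: o_def)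
qed

lemma meas_G_stake_borel[measurable]: "(\<lambda>\<omega>. G (stake n \<omega>)) \<in> borel_measurable (SS P)"
  by (rule meas_G_stake) simp

lemma meas_G_stake_pred[measurable]: "Measurable.pred (SS P) (\<lambda>\<omega>. G (stake n \<omega>))"
  by (rule meas_G_stake) simp

lemma K:
  fixes P :: "(bool\<times>bool) pmf" and G :: "(bool\<times>bool) list \<Rightarrow> ennreal"
  assumes F[measurable]: "F \<in> borel_measurable (SS P)"
  shows "(\<integral>\<^sup>+\<omega>. G (stake n \<omega>) * F (sdrop n \<omega>) \<partial>SS P)
     = (\<integral>\<^sup>+\<omega>. G (stake n \<omega>) \<partial>SS P) * (\<integral>\<^sup>+\<omega>. F \<omega> \<partial>SS P)"
proof (induction n arbitrary: G)
  case 0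
  interpret prob_space "SS P" by (rule prob_SS)
  show ?case by (simp add: nn_integral_cmult)
next
  case (Suc n)
  have "(\<integral>\<^sup>+\<omega>. G (stake (Suc n) \<omega>) * F (sdrop (Suc n) \<omega>) \<partial>SS P)
    = (\<integral>\<^sup>+x. (\<integral>\<^sup>+\<omega>. G (x # stake n \<omega>) * F (sdrop n \<omega>) \<partial>SS P) \<partial>measure_pmf P)"
    by (subst prob_space.nn_integral_stream_space[OF prob_space_measure_pmf]) auto
  also have "\<dots> = (\<integral>\<^sup>+x. (\<integral>\<^sup>+\<omega>. G (x # stake n \<omega>) \<partial>SS P) * (\<integral>\<^sup>+\<omega>. F \<omega> \<partial>SS P) \<partial>measure_pmf P)"
    using Suc.IH[of "\<lambda>l. G (_ # l)"] by simp
  also have "\<dots> = (\<integral>\<^sup>+x. (\<integral>\<^sup>+\<omega>. G (x # stake n \<omega>) \<partial>SS P) \<partial>measure_pmf P) * (\<integral>\<^sup>+\<omega>. F \<omega> \<partial>SS P)"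
    by (rule nn_integral_multc) simp
  also have "(\<integral>\<^sup>+x. (\<integral>\<^sup>+\<omega>. G (x # stake n \<omega>) \<partial>SS P) \<partial>measure_pmf P) = (\<integral>\<^sup>+\<omega>. G (stake (Suc n) \<omega>) \<partial>SS P)"
    by (subst prob_space.nn_integral_stream_space[OF prob_space_measure_pmf]) auto
  finally show ?case .
qed

lemma SM_aux:
  fixes \<tau> :: "(bool\<times>bool) stream \<Rightarrow> nat"
  assumes F[measurable]: "F \<in> borel_measurable (SS P)"
    and Q: "AE \<omega> in SS P. \<forall>n. (\<tau> \<omega> = n \<longleftrightarrow> stake n \<omega> \<in> Q n)"
  shows "(\<integral>\<^sup>+\<omega>. F (sdrop (\<tau> \<omega>) \<omega>) \<partial>SS P) = (\<Sum>n. \<integral>\<^sup>+\<omega>. indicator (Q n) (stake n \<omega>) \<partial>SS P) * (\<integral>\<^sup>+\<omega>. F \<omega> \<partial>SS P)"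
proof -
  have "(\<integral>\<^sup>+\<omega>. F (sdrop (\<tau> \<omega>) \<omega>) \<partial>SS P) = (\<integral>\<^sup>+\<omega>. (\<Sum>n. indicator (Q n) (stake n \<omega>) * F (sdrop n \<omega>)) \<partial>SS P)"
  proof (rule nn_integral_cong_AE)
    show "AE \<omega> in SS P. F (sdrop (\<tau> \<omega>) \<omega>) = (\<Sum>n. indicator (Q n) (stake n \<omega>) * F (sdrop n \<omega>))"
      using Q
    proof eventually_elim
      case (elim \<omega>)
      have "(\<Sum>n. indicator (Q n) (stake n \<omega>) * F (sdrop n \<omega>)) = (\<Sum>n\<in>{\<tau> \<omega>}. indicator (Q n) (stake n \<omega>) * F (sdrop n \<omega>))"
      proof (rule suminf_finite)
        show "n \<notin> {\<tau> \<omega>} \<Longrightarrow> indicator (Q n) (stake n \<omega>) * F (sdrop n \<omega>) = 0" for n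
          using elim[rule_format, of n] by (auto simp: indicator_def)
      qed simp
      moreover have "stake (\<tau> \<omega>) \<omega> \<in> Q (\<tau> \<omega>)" using elim by blast
      ultimately show ?case by simp
    qed
  qed
  also have "\<dots> = (\<Sum>n. \<integral>\<^sup>+\<omega>. indicator (Q n) (stake n \<omega>) * F (sdrop n \<omega>) \<partial>SS P)"
    apply (rule nn_integral_suminf) apply measurable done
  also have "\<dots> = (\<Sum>n. (\<integral>\<^sup>+\<omega>. indicator (Q n) (stake n \<omega>) \<partial>SS P) * (\<integral>\<^sup>+\<omega>. F \<omega> \<partial>SS P))"
    by (simp add: K[OF F])
  finally show ?thesis by simp
qed

lemma SM:
  fixes \<tau> :: "(bool\<times>bool) stream \<Rightarrow> nat"
  assumes F[measurable]: "F \<in> borel_measurable (SS P)"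
    and Q: "AE \<omega> in SS P. \<forall>n. (\<tau> \<omega> = n \<longleftrightarrow> stake n \<omega> \<in> Q n)"
  shows "(\<integral>\<^sup>+\<omega>. F (sdrop (\<tau> \<omega>) \<omega>) \<partial>SS P) = (\<integral>\<^sup>+\<omega>. F \<omega> \<partial>SS P)"
proof -
  interpret prob_space "SS P" by (rule prob_SS)
  have "(\<integral>\<^sup>+\<omega>. 1 \<partial>SS P) = (\<Sum>n. \<integral>\<^sup>+\<omega>. indicator (Q n) (stake n \<omega>) \<partial>SS P) * (\<integral>\<^sup>+\<omega>. 1 \<partial>SS P)"
    using SM_aux[of "\<lambda>_. 1" P \<tau> Q] Q by simp
  then have "(\<Sum>n. \<integral>\<^sup>+\<omega>. indicator (Q n) (stake n \<omega>) \<partial>SS P) = 1" by simp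
  then show ?thesis using SM_aux[OF F Q] by simp
qed



lemma meas_snth_pred[measurable]: "(\<lambda>\<omega>. R (\<omega> !! k)) \<in> measurable (SS P) (count_space UNIV)"
proof -
  have "R \<in> measurable (measure_pmf P) (count_space UNIV)" by simp
  from measurable_compose[OF measurable_snth this] show ?thesis by (simp add: o_def)
qed

lemma sets_SS_Collect:
  assumes "Measurable.pred (SS P) R" shows "Collect R \<in> sets (SS P)"
proof -
  have "{x\<in>space (SS P). R x} \<in> sets (SS P)" using assms by measurable
  then show ?thesis by simp
qed

lemma geo_tail:
  fixes P and Pr :: "bool\<times>bool \<Rightarrow> bool"
  assumes q: "emeasure (measure_pmf P) {x. \<not> Pr x} = ennreal q" "0 \<le> q"
  shows "emeasure (SS P) {\<omega>. \<forall>k<n. \<not> Pr (\<omega>!!k)} = ennreal (q^n)"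
proof (induction n)
  case 0
  then show ?case by simp
next
  case (Suc n)
  have eq: "{x. \<forall>k<Suc n. \<not> Pr ((t##x)!!k)} = (if Pr t then {} else {x. \<forall>k<n. \<not> Pr (x!!k)})" for t
    by (auto simp: less_Suc_eq_0_disj)
  have "emeasure (SS P) {\<omega>. \<forall>k<Suc n. \<not> Pr (\<omega>!!k)}
      = (\<integral>\<^sup>+t. emeasure (SS P) {x. \<forall>k<Suc n. \<not> Pr ((t##x)!!k)} \<partial>measure_pmf P)"
    by (subst prob_space.emeasure_stream_space[OF prob_space_measure_pmf]) (auto intro!: sets_SS_Collect)
  also have "\<dots> = (\<integral>\<^sup>+t. indicator {x. \<not> Pr x} t * ennreal (q^n) \<partial>measure_pmf P)"
    by (rule nn_integral_cong) (simp add: eq Suc indicator_def)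
  also have "\<dots> = ennreal q * ennreal (q^n)"
    by (subst nn_integral_multc) (auto simp: q)
  finally show ?case using q by (simp add: ennreal_mult)
qed

lemma geo_never:
  fixes P and Pr :: "bool\<times>bool \<Rightarrow> bool"
  assumes q: "emeasure (measure_pmf P) {x. \<not> Pr x} = ennreal q" "0 \<le> q" "q < 1"
  shows "emeasure (SS P) {\<omega>. \<forall>k. \<not> Pr (\<omega>!!k)} = 0"
proof -
  interpret prob_space "SS P" by (rule prob_SS)
  let ?A = "{\<omega>. \<forall>k. \<not> Pr (\<omega>!!k)}"
  have mA: "?A \<in> sets (SS P)" by (intro sets_SS_Collect) measurable
  have "measure (SS P) ?A \<le> q^n" for n
  proof -
    have mB: "{\<omega>. \<forall>k<n. \<not> Pr (\<omega>!!k)} \<in> sets (SS P)" by (intro sets_SS_Collect) measurable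
    have "emeasure (SS P) ?A \<le> emeasure (SS P) {\<omega>. \<forall>k<n. \<not> Pr (\<omega>!!k)}"
      by (rule emeasure_mono) (auto intro: mB)
    also have "\<dots> = ennreal (q^n)" by (rule geo_tail[OF q(1,2)])
    finally show ?thesis using q(2)
      by (simp add: emeasure_eq_measure)
  qed
  moreover have "(\<lambda>n. q^n) \<longlonglongrightarrow> 0" using q by (intro LIMSEQ_power_zero) auto
  ultimately have "measure (SS P) ?A \<le> 0"
    by (intro LIMSEQ_le_const[of "\<lambda>n. q^n"]) auto
  then show ?thesis by (simp add: emeasure_eq_measure measure_nonneg antisym)
qed

lemma geo_AE:
  fixes P and Pr :: "bool\<times>bool \<Rightarrow> bool"
  assumes q: "emeasure (measure_pmf P) {x. \<not> Pr x} = ennreal q" "0 \<le> q" "q < 1"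
  shows "AE \<omega> in SS P. \<exists>k. Pr (\<omega>!!k)"
proof (subst AE_iff_measurable[OF _ refl])
  show "{x \<in> space (SS P). \<not> (\<exists>k. Pr (x !! k))} \<in> sets (SS P)" by measurable
  show "emeasure (SS P) {x \<in> space (SS P). \<not> (\<exists>k. Pr (x !! k))} = 0"
    using geo_never[OF q] by simp
qed

lemma geo_mean:
  fixes P and Pr :: "bool\<times>bool \<Rightarrow> bool"
  assumes q: "emeasure (measure_pmf P) {x. \<not> Pr x} = ennreal q" "0 \<le> q" "q < 1"
  shows "(\<integral>\<^sup>+\<omega>. of_nat (Suc (LEAST k. Pr (\<omega>!!k))) \<partial>SS P) = ennreal (1/(1-q))"
proof -
  have "(\<integral>\<^sup>+\<omega>. of_nat (Suc (LEAST k. Pr (\<omega>!!k))) \<partial>SS P)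
     = (\<Sum>t. emeasure (SS P) {\<omega>\<in>space (SS P). t < Suc (LEAST k. Pr (\<omega>!!k))})"
    by (rule nn_integral_nat_function) measurable
  also have "\<dots> = (\<Sum>t. ennreal (q^t))"
  proof (rule suminf_cong)
    fix t
    have "emeasure (SS P) {\<omega>\<in>space (SS P). t < Suc (LEAST k. Pr (\<omega>!!k))} = emeasure (SS P) {\<omega>. \<forall>k<t. \<not> Pr (\<omega>!!k)}"
    proof (rule emeasure_eq_AE)
      show "AE \<omega> in SS P. (\<omega> \<in> {\<omega>\<in>space (SS P). t < Suc (LEAST k. Pr (\<omega>!!k))}) = (\<omega> \<in> {\<omega>. \<forall>k<t. \<not> Pr (\<omega>!!k)})"
        using geo_AE[OF q]
      proof eventually_elim
        case (elim \<omega>)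
        show ?case
        proof
          assume "\<omega> \<in> {\<omega>\<in>space (SS P). t < Suc (LEAST k. Pr (\<omega>!!k))}"
          then have "t \<le> (LEAST k. Pr (\<omega>!!k))" by simp
          then show "\<omega> \<in> {\<omega>. \<forall>k<t. \<not> Pr (\<omega>!!k)}" 
            using not_less_Least[where P="\<lambda>k. Pr (\<omega>!!k)"] by force
        next
          assume "\<omega> \<in> {\<omega>. \<forall>k<t. \<not> Pr (\<omega>!!k)}"
          moreover have "Pr (\<omega> !! (LEAST k. Pr (\<omega>!!k)))" using elim by (rule LeastI_ex)
          ultimately show "\<omega> \<in> {\<omega>\<in>space (SS P). t < Suc (LEAST k. Pr (\<omega>!!k))}"
            by (auto simp: not_less_eq[symmetric])
        qed
      qed
    qed (auto intro!: sets_SS_Collect)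
    then show "emeasure (SS P) {\<omega>\<in>space (SS P). t < Suc (LEAST k. Pr (\<omega>!!k))} = ennreal (q^t)"
      using geo_tail[OF q(1,2)] by simp
  qed
  also have "\<dots> = ennreal (1/(1-q))"
  proof -
    have "(\<lambda>t. q^t) sums (1/(1-q))" using q by (intro geometric_sums) auto
    then have "(\<lambda>t. ennreal (q^t)) sums ennreal (1/(1-q))" using q by (subst sums_ennreal) auto
    then show ?thesis by (simp add: sums_iff)
  qed
  finally show ?thesis .
qed



fun sp :: "user \<Rightarrow> bool \<times> bool \<Rightarrow> bool" where
  "sp UA x = (fst x \<and> \<not> snd x)"
| "sp UB x = (snd x \<and> \<not> fst x)"

fun ou :: "user \<Rightarrow> user" where
  "ou UA = UB" | "ou UB = UA"

lemma all_user: "(\<forall>v. Q v) \<longleftrightarrow> Q UA \<and> Q UB"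
  by (metis user.exhaust)

lemma ex_user: "(\<exists>v. Q v) \<longleftrightarrow> Q UA \<or> Q UB"
  by (metis user.exhaust)

lemma succ_sp: "succ \<omega> u k \<longleftrightarrow> sp u (\<omega> !! k)"
  by (cases u) (auto simp: succ_def tx_def all_user)

lemma sp_excl: "sp u x \<Longrightarrow> \<not> sp (ou u) x"
  by (cases u) auto

lemma other_user: "v \<noteq> u \<Longrightarrow> v = ou u"
  by (cases u; cases v) auto

lemma ou_ne: "ou u \<noteq> u" by (cases u) auto

lemma ex_succ: "(\<exists>v. succ \<omega> v j) \<longleftrightarrow> sp u (\<omega>!!j) \<or> sp (ou u) (\<omega>!!j)"
  by (cases u) (auto simp: succ_sp ex_user)

lemma refresh_eq: "refresh \<omega> u k \<longleftrightarrow> sp u (\<omega>!!k) \<and>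
   (\<exists>m>k. sp (ou u) (\<omega>!!m) \<and> (\<forall>j. k < j \<and> j < m \<longrightarrow> \<not> sp u (\<omega>!!j) \<and> \<not> sp (ou u) (\<omega>!!j)))"
proof -
  have "((\<exists>v. succ \<omega> v m) \<and> \<not> succ \<omega> u m) \<longleftrightarrow> sp (ou u) (\<omega>!!m)" for m
    by (cases u) (auto simp: succ_sp ex_user)
  then show ?thesis unfolding refresh_def by (auto simp: ex_succ[of \<omega> _ u] succ_sp)
qed

lemma M_pos: "M \<omega> v k0 k1 > 0 \<longleftrightarrow> (\<exists>j. k0 < j \<and> j \<le> k1 \<and> sp v (\<omega>!!j))"
proof -
  have "finite {j. k0 < j \<and> j \<le> k1 \<and> succ \<omega> v j}" by (rule finite_subset[of _ "{..k1}"]) auto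
  then show ?thesis by (auto simp: M_def card_gt_0_iff succ_sp)
qed

lemma Mpos_all:
  assumes "refresh \<omega> u k0" "sp u (\<omega>!!k1)" "k0 < k1"
  shows "M \<omega> v k0 k1 > 0"
proof (cases "v = u")
  case True then show ?thesis using assms by (auto simp: M_pos)
next
  case False
  then have v: "v = ou u" by (rule other_user)
  from assms(1) obtain m where m: "m > k0" "sp (ou u) (\<omega>!!m)"
    "\<forall>j. k0 < j \<and> j < m \<longrightarrow> \<not> sp u (\<omega>!!j) \<and> \<not> sp (ou u) (\<omega>!!j)"
    by (auto simp: refresh_eq)
  have "m \<noteq> k1" using m(2) sp_excl[OF assms(2)] by auto
  moreover have "\<not> k1 < m" using m(3) assms by auto
  ultimately show ?thesis using m v by (auto simp: M_pos intro!: exI[of _ m])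
qed

lemma is_cycle_eq:
  assumes r0: "refresh \<omega> u k0"
  shows "is_cycle \<omega> u k0 k1 \<longleftrightarrow> refresh \<omega> u k1 \<and> k0 < k1 \<and> (\<forall>k'. k0 < k' \<and> k' < k1 \<longrightarrow> \<not> refresh \<omega> u k')"
proof
  assume c: "is_cycle \<omega> u k0 k1"
  have "\<not> (\<exists>k'. k0 < k' \<and> k' < k1 \<and> refresh \<omega> u k' \<and> (\<exists>v. M \<omega> v k0 k' = 0))"
  proof
    assume "\<exists>k'. k0 < k' \<and> k' < k1 \<and> refresh \<omega> u k' \<and> (\<exists>v. M \<omega> v k0 k' = 0)"
    then obtain k' v where "k0 < k'" "refresh \<omega> u k'" "M \<omega> v k0 k' = 0" by blast
    moreover have "sp u (\<omega>!!k')" using \<open>refresh \<omega> u k'\<close> by (simp add: refresh_eq)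
    ultimately show False using Mpos_all[OF r0, of k' v] by simp
  qed
  with c show "refresh \<omega> u k1 \<and> k0 < k1 \<and> (\<forall>k'. k0 < k' \<and> k' < k1 \<longrightarrow> \<not> refresh \<omega> u k')"
    unfolding is_cycle_def by blast
next
  assume c: "refresh \<omega> u k1 \<and> k0 < k1 \<and> (\<forall>k'. k0 < k' \<and> k' < k1 \<longrightarrow> \<not> refresh \<omega> u k')"
  then have "sp u (\<omega>!!k1)" by (simp add: refresh_eq)
  with c r0 Mpos_all show "is_cycle \<omega> u k0 k1" unfolding is_cycle_def by blast
qed

lemma refresh_sdrop: "refresh (sdrop n \<omega>) u k \<longleftrightarrow> refresh \<omega> u (n + k)"
proof
  assume "refresh (sdrop n \<omega>) u k"
  then obtain m where m: "sp u (\<omega>!!(n+k))" "m > k" "sp (ou u) (\<omega>!!(n+m))"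
     "\<forall>j. k < j \<and> j < m \<longrightarrow> \<not> sp u (\<omega>!!(n+j)) \<and> \<not> sp (ou u) (\<omega>!!(n+j))"
    by (auto simp: refresh_eq sdrop_snth)
  have "\<forall>j. n+k < j \<and> j < n+m \<longrightarrow> \<not> sp u (\<omega>!!j) \<and> \<not> sp (ou u) (\<omega>!!j)"
  proof (intro allI impI)
    fix j assume "n+k < j \<and> j < n+m"
    then have "k < j - n \<and> j - n < m" "n + (j - n) = j" by arith+
    then show "\<not> sp u (\<omega>!!j) \<and> \<not> sp (ou u) (\<omega>!!j)" using m(4)[rule_format, of "j - n"] by simp
  qed
  with m show "refresh \<omega> u (n + k)" unfolding refresh_eq by (auto intro!: exI[of _ "n+m"])
next
  assume "refresh \<omega> u (n + k)"
  then obtain m where m: "sp u (\<omega>!!(n+k))" "m > n+k" "sp (ou u) (\<omega>!!m)"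
     "\<forall>j. n+k < j \<and> j < m \<longrightarrow> \<not> sp u (\<omega>!!j) \<and> \<not> sp (ou u) (\<omega>!!j)"
    by (auto simp: refresh_eq)
  have "\<forall>j. k < j \<and> j < m - n \<longrightarrow> \<not> sp u (\<omega>!!(n+j)) \<and> \<not> sp (ou u) (\<omega>!!(n+j))"
    using m(4) by auto
  moreover have "\<omega>!!(n + (m-n)) = \<omega>!!m" using m(2) by simp
  ultimately show "refresh (sdrop n \<omega>) u k" using m unfolding refresh_eq sdrop_snth
    by (auto intro!: exI[of _ "m-n"])
qed

definition good :: "user \<Rightarrow> (bool\<times>bool) stream \<Rightarrow> bool" where
  "good u \<omega> \<longleftrightarrow> (\<forall>n. \<exists>k\<ge>n. sp u (\<omega>!!k)) \<and> (\<forall>n. \<exists>k\<ge>n. sp (ou u) (\<omega>!!k))"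

definition t0 :: "user \<Rightarrow> (bool\<times>bool) stream \<Rightarrow> nat" where
  "t0 u \<omega> = (LEAST k. sp u (\<omega>!!k))"

definition hh :: "user \<Rightarrow> (bool\<times>bool) stream \<Rightarrow> nat" where
  "hh u \<omega> = (LEAST k. t0 u \<omega> < k \<and> sp (ou u) (\<omega>!!k))"

lemma exists_refresh:
  assumes "sp u (\<omega>!!a)" "a < b" "sp (ou u) (\<omega>!!b)" "\<forall>j. a < j \<and> j < b \<longrightarrow> \<not> sp (ou u) (\<omega>!!j)"
  shows "\<exists>r. a \<le> r \<and> r < b \<and> refresh \<omega> u r"
proof -
  define A where "A = {k. k < b \<and> sp u (\<omega>!!k)}"
  have fin: "finite A" unfolding A_def by auto
  have aA: "a \<in> A" using assms unfolding A_def by auto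
  define r where "r = Max A"
  have rA: "r \<in> A" using fin aA unfolding r_def by (auto intro: Max_in)
  have ar: "a \<le> r" using fin aA unfolding r_def by (auto intro: Max_ge)
  have nj: "\<not> sp u (\<omega>!!j)" if "r < j" "j < b" for j
  proof
    assume "sp u (\<omega>!!j)"
    then have "j \<in> A" using that unfolding A_def by auto
    then have "j \<le> r" using fin unfolding r_def by (auto intro: Max_ge)
    with that show False by simp
  qed
  have "refresh \<omega> u r" unfolding refresh_eq
    using rA nj ar assms(3,4) unfolding A_def by (auto intro!: exI[of _ b])
  then show ?thesis using ar rA unfolding A_def by auto
qed

lemma good_t0: "good u \<omega> \<Longrightarrow> sp u (\<omega>!!t0 u \<omega>)"
  unfolding good_def t0_def by (metis LeastI)

lemma good_hh: "good u \<omega> \<Longrightarrow> t0 u \<omega> < hh u \<omega> \<and> sp (ou u) (\<omega>!!hh u \<omega>)"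
proof -
  assume g: "good u \<omega>"
  then obtain k where "k \<ge> Suc (t0 u \<omega>)" "sp (ou u) (\<omega>!!k)" unfolding good_def by blast
  then have "t0 u \<omega> < k \<and> sp (ou u) (\<omega>!!k)" by simp
  then show ?thesis unfolding hh_def by (rule LeastI)
qed

lemma hh_min: "t0 u \<omega> < j \<Longrightarrow> j < hh u \<omega> \<Longrightarrow> \<not> sp (ou u) (\<omega>!!j)"
  unfolding hh_def using not_less_Least by blast

lemma good_refresh_ge: assumes "good u \<omega>" shows "\<exists>r\<ge>n. refresh \<omega> u r"
proof -
  obtain a where a: "a \<ge> n" "sp u (\<omega>!!a)" using assms unfolding good_def by blast
  obtain k where "k \<ge> Suc a" "sp (ou u) (\<omega>!!k)" using assms unfolding good_def by blast
  then have ex: "a < k \<and> sp (ou u) (\<omega>!!k)" by simp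
  define b where "b = (LEAST k. a < k \<and> sp (ou u) (\<omega>!!k))"
  have b: "a < b" "sp (ou u) (\<omega>!!b)" using LeastI[of "\<lambda>k. a < k \<and> sp (ou u) (\<omega>!!k)", OF ex] unfolding b_def by auto
  have "\<forall>j. a < j \<and> j < b \<longrightarrow> \<not> sp (ou u) (\<omega>!!j)" unfolding b_def using not_less_Least by blast
  from exists_refresh[OF a(2) b this] a show ?thesis by (meson order_trans)
qed

lemma good_f_refresh: "good u \<omega> \<Longrightarrow> refresh \<omega> u (first_refresh \<omega> u)"
  unfolding first_refresh_def using good_refresh_ge by (metis LeastI)

lemma f_lt_hh: assumes "good u \<omega>" shows "first_refresh \<omega> u < hh u \<omega>"
proof -
  obtain r where "t0 u \<omega> \<le> r" "r < hh u \<omega>" "refresh \<omega> u r"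
    using exists_refresh[OF good_t0[OF assms] conjunct1[OF good_hh[OF assms]] conjunct2[OF good_hh[OF assms]]] hh_min
    by blast
  then show ?thesis unfolding first_refresh_def by (meson Least_le le_less_trans)
qed

lemma no_refresh_between:
  assumes g: "good u \<omega>" and k: "first_refresh \<omega> u < k" "k \<le> hh u \<omega>"
  shows "\<not> refresh \<omega> u k"
proof
  assume rk: "refresh \<omega> u k"
  then have spk: "sp u (\<omega>!!k)" by (simp add: refresh_eq)
  have "k \<noteq> hh u \<omega>" using good_hh[OF g] sp_excl[OF spk] by auto
  with k have khh: "k < hh u \<omega>" by simp
  obtain m where m: "m > first_refresh \<omega> u" "sp (ou u) (\<omega>!!m)"
     "\<forall>j. first_refresh \<omega> u < j \<and> j < m \<longrightarrow> \<not> sp u (\<omega>!!j) \<and> \<not> sp (ou u) (\<omega>!!j)"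
    using good_f_refresh[OF g] by (auto simp: refresh_eq)
  have "m \<noteq> k" using m(2) sp_excl[OF spk] by auto
  moreover have "\<not> k < m" using m(3) spk k by auto
  ultimately have mk: "m < k" by simp
  have "sp u (\<omega>!!first_refresh \<omega> u)" using good_f_refresh[OF g] by (simp add: refresh_eq)
  then have "t0 u \<omega> \<le> first_refresh \<omega> u" unfolding t0_def by (rule Least_le)
  then show False using hh_min[of u \<omega> m] m mk khh by simp
qed

lemma g_eq:
  assumes g: "good u \<omega>"
  shows "(LEAST k1. is_cycle \<omega> u (first_refresh \<omega> u) k1) = Suc (hh u \<omega>) + first_refresh (sdrop (Suc (hh u \<omega>)) \<omega>) u"
proof -
  define H where "H = Suc (hh u \<omega>)"
  define f where "f = first_refresh \<omega> u"
  have rf: "refresh \<omega> u f" unfolding f_def by (rule good_f_refresh[OF g])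
  have r'eq: "first_refresh (sdrop H \<omega>) u = (LEAST k. refresh \<omega> u (H + k))"
    unfolding first_refresh_def refresh_sdrop ..
  define r' where "r' = (LEAST k. refresh \<omega> u (H + k))"
  obtain r where r: "r \<ge> H" "refresh \<omega> u r" using good_refresh_ge[OF g] by blast
  then have "refresh \<omega> u (H + (r - H))" by simp
  then have rr': "refresh \<omega> u (H + r')" unfolding r'_def by (rule LeastI)
  have fH: "f < H" using f_lt_hh[OF g] unfolding f_def H_def by simp
  have "(LEAST k1. is_cycle \<omega> u f k1) = H + r'"
  proof (rule Least_equality)
    show "is_cycle \<omega> u f (H + r')"
      unfolding is_cycle_eq[OF rf]
    proof (intro conjI allI impI)
      show "refresh \<omega> u (H + r')" by (rule rr')
      show "f < H + r'" using fH by simp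
      fix k' assume k': "f < k' \<and> k' < H + r'"
      show "\<not> refresh \<omega> u k'"
      proof (cases "k' \<le> hh u \<omega>")
        case True then show ?thesis using no_refresh_between[OF g] k' unfolding f_def by blast
      next
        case False
        then have "k' = H + (k' - H)" "k' - H < r'" using k' unfolding H_def by auto
        then show ?thesis using not_less_Least[of "k' - H" "\<lambda>k. refresh \<omega> u (H + k)"] unfolding r'_def by metis
      qed
    qed
    fix y assume "is_cycle \<omega> u f y"
    then have y: "refresh \<omega> u y" "f < y" unfolding is_cycle_eq[OF rf] by auto
    then have "\<not> y \<le> hh u \<omega>" using no_refresh_between[OF g] unfolding f_def by blast
    then have yH: "H \<le> y" unfolding H_def by simp
    then have "y = H + (y - H)" by simp
    with y have "refresh \<omega> u (H + (y - H))" by simp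
    then have "r' \<le> y - H" unfolding r'_def by (rule Least_le)
    then show "H + r' \<le> y" using yH by simp
  qed
  then show ?thesis using r'eq unfolding f_def H_def r'_def by simp
qed

lemma stake_eq_nth: "stake n \<omega> = stake n \<omega>' \<Longrightarrow> k < n \<Longrightarrow> \<omega>!!k = \<omega>'!!k"
  by (metis stake_nth)

lemma t0_stop:
  assumes g: "good u \<omega>" and eq: "\<And>k. k \<le> t0 u \<omega> \<Longrightarrow> \<omega>'!!k = \<omega>!!k"
  shows "t0 u \<omega>' = t0 u \<omega>"
  unfolding t0_def[of u \<omega>']
proof (rule Least_equality)
  show "sp u (\<omega>' !! t0 u \<omega>)" using eq[of "t0 u \<omega>"] good_t0[OF g] by simp
  fix y assume "sp u (\<omega>' !! y)"
  then show "t0 u \<omega> \<le> y" using eq[of y] unfolding t0_def by (metis Least_le nat_le_linear)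
qed

lemma hh_stop:
  assumes g: "good u \<omega>" and eq: "\<And>k. k \<le> hh u \<omega> \<Longrightarrow> \<omega>'!!k = \<omega>!!k"
  shows "hh u \<omega>' = hh u \<omega>"
proof -
  have t: "t0 u \<omega>' = t0 u \<omega>" using good_hh[OF g] by (intro t0_stop[OF g] eq) auto
  show ?thesis unfolding hh_def[of u \<omega>'] t
  proof (rule Least_equality)
    show "t0 u \<omega> < hh u \<omega> \<and> sp (ou u) (\<omega>' !! hh u \<omega>)" using eq[of "hh u \<omega>"] good_hh[OF g] by simp
    fix y assume y: "t0 u \<omega> < y \<and> sp (ou u) (\<omega>' !! y)"
    show "hh u \<omega> \<le> y"
    proof (rule ccontr)
      assume "\<not> hh u \<omega> \<le> y"
      then show False using hh_min[of u \<omega> y] y eq[of y] by simp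
    qed
  qed
qed

lemma hh_split:
  assumes g: "good u \<omega>"
  shows "Suc (hh u \<omega>) = Suc (t0 u \<omega>) + Suc (LEAST k. sp (ou u) (sdrop (Suc (t0 u \<omega>)) \<omega> !! k))"
proof -
  define L where "L = (LEAST k. sp (ou u) (\<omega> !! (Suc (t0 u \<omega>) + k)))"
  have L': "(LEAST k. sp (ou u) (sdrop (Suc (t0 u \<omega>)) \<omega> !! k)) = L" unfolding L_def sdrop_snth by simp
  have "hh u \<omega> = Suc (t0 u \<omega>) + (hh u \<omega> - Suc (t0 u \<omega>))" using good_hh[OF g] by simp
  then have ex: "sp (ou u) (\<omega> !! (Suc (t0 u \<omega>) + (hh u \<omega> - Suc (t0 u \<omega>))))" using good_hh[OF g] by metis
  have spL: "sp (ou u) (\<omega> !! (Suc (t0 u \<omega>) + L))" unfolding L_def by (rule LeastI[of "\<lambda>k. sp (ou u) (\<omega> !! (Suc (t0 u \<omega>) + k))", OF ex])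
  have "hh u \<omega> = Suc (t0 u \<omega>) + L"
    unfolding hh_def
  proof (rule Least_equality)
    show "t0 u \<omega> < Suc (t0 u \<omega>) + L \<and> sp (ou u) (\<omega> !! (Suc (t0 u \<omega>) + L))" using spL by simp
    fix y assume y: "t0 u \<omega> < y \<and> sp (ou u) (\<omega> !! y)"
    then have "y = Suc (t0 u \<omega>) + (y - Suc (t0 u \<omega>))" by simp
    with y have "sp (ou u) (\<omega> !! (Suc (t0 u \<omega>) + (y - Suc (t0 u \<omega>))))" by metis
    then have "L \<le> y - Suc (t0 u \<omega>)" unfolding L_def by (rule Least_le)
    then show "Suc (t0 u \<omega>) + L \<le> y" using y by linarith
  qed
  then show ?thesis using L' by simp
qed



fun cc :: "real \<Rightarrow> real \<Rightarrow> user \<Rightarrow> real" where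
  "cc pA pB UA = pA * (1 - pB)"
| "cc pA pB UB = pB * (1 - pA)"

lemma slot_not_sp:
  assumes "0 \<le> pA" "pA \<le> 1" "0 \<le> pB" "pB \<le> 1"
  shows "emeasure (measure_pmf (slot_pmf pA pB)) {x. \<not> sp u x} = ennreal (1 - cc pA pB u)"
proof -
  have UA: "{x. \<not> sp UA x} = {(True,True),(False,True),(False,False)}" by auto
  have UB: "{x. \<not> sp UB x} = {(True,True),(True,False),(False,False)}" by auto
  show ?thesis
  proof (cases u)
    case UA
    have "emeasure (measure_pmf (slot_pmf pA pB)) {x. \<not> sp u x} = ennreal (pA * pB + (1 - pA) * pB + (1 - pA) * (1 - pB))"
      using assms unfolding UA \<open>{x. \<not> sp UA x} = _\<close>
      by (subst emeasure_measure_pmf_finite) (auto simp: slot_pmf_def pmf_pair ennreal_plus[symmetric] simp del: ennreal_plus)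
    also have "pA * pB + (1 - pA) * pB + (1 - pA) * (1 - pB) = 1 - cc pA pB u" using UA by (simp add: algebra_simps)
    finally show ?thesis .
  next
    case UB
    have "emeasure (measure_pmf (slot_pmf pA pB)) {x. \<not> sp u x} = ennreal (pA * pB + pA * (1 - pB) + (1 - pA) * (1 - pB))"
      using assms unfolding UB \<open>{x. \<not> sp UB x} = _\<close>
      by (subst emeasure_measure_pmf_finite) (auto simp: slot_pmf_def pmf_pair ennreal_plus[symmetric] simp del: ennreal_plus)
    also have "pA * pB + pA * (1 - pB) + (1 - pA) * (1 - pB) = 1 - cc pA pB u" using UB by (simp add: algebra_simps)
    finally show ?thesis .
  qed
qed

lemma cc_pos: "0 < pA \<Longrightarrow> pA < 1 \<Longrightarrow> 0 < pB \<Longrightarrow> pB < 1 \<Longrightarrow> 0 < cc pA pB u"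
  by (cases u) auto

lemma cc_le1: "0 < pA \<Longrightarrow> pA < 1 \<Longrightarrow> 0 < pB \<Longrightarrow> pB < 1 \<Longrightarrow> cc pA pB u \<le> 1"
  by (cases u) (auto simp: mult_le_one)

declare meas_snth_pred[measurable del]
lemma meas_sp[measurable]: "Measurable.pred (SS P) (\<lambda>\<omega>. sp u (\<omega>!!k))"
  by (rule meas_snth_pred)
lemma meas_t0[measurable]: "t0 u \<in> measurable (SS P) (count_space UNIV)"
  unfolding t0_def[abs_def] by measurable
lemma meas_t0_less[measurable]: "Measurable.pred (SS P) (\<lambda>\<omega>. t0 u \<omega> < k)"
  by (rule pred_less_const[OF meas_t0]) simp
lemma meas_hh[measurable]: "hh u \<in> measurable (SS P) (count_space UNIV)"
proof -
  have m: "(\<lambda>\<omega>. LEAST k. t0 u \<omega> < k \<and> sp (ou u) (\<omega>!!k)) \<in> measurable (SS P) (count_space UNIV)"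
  proof (rule measurable_Least)
    fix k
    show "Measurable.pred (SS P) (\<lambda>\<omega>. t0 u \<omega> < k \<and> sp (ou u) (\<omega>!!k))"
      by (rule pred_intros_logic(3)) (rule meas_t0_less, rule meas_sp)
  qed
  have eq: "hh u = (\<lambda>\<omega>. LEAST k. t0 u \<omega> < k \<and> sp (ou u) (\<omega>!!k))"
    by (rule ext) (rule hh_def)
  show ?thesis by (subst eq) (rule m)
qed

lemma meas_f[measurable]: "(\<lambda>\<omega>. first_refresh \<omega> u) \<in> measurable (SS P) (count_space UNIV)"
  unfolding first_refresh_def refresh_eq by measurable

lemma M_zero: "M \<omega> v k0 k1 = 0 \<longleftrightarrow> \<not> (\<exists>j. k0 < j \<and> j \<le> k1 \<and> sp v (\<omega>!!j))"
  using M_pos[of \<omega> v k0 k1] by auto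

lemma meas_is_cycle[measurable]: "Measurable.pred (SS P) (\<lambda>\<omega>. is_cycle \<omega> u j k1)"
  unfolding is_cycle_def refresh_eq M_pos M_zero all_user ex_user by measurable

definition gfun :: "user \<Rightarrow> (bool\<times>bool) stream \<Rightarrow> nat" where
  "gfun u \<omega> = (LEAST k1. is_cycle \<omega> u (first_refresh \<omega> u) k1)"

lemma meas_gfun[measurable]: "gfun u \<in> measurable (SS P) (count_space UNIV)"
proof -
  have "(\<lambda>\<omega>. (\<lambda>j \<omega>. LEAST k1. is_cycle \<omega> u j k1) (first_refresh \<omega> u) \<omega>) \<in> measurable (SS P) (count_space UNIV)"
    by (rule measurable_compose_countable'[where I=UNIV]) auto
  then show ?thesis unfolding gfun_def by simp
qed

lemma AE_good:
  assumes "0 < pA" "pA < 1" "0 < pB" "pB < 1"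
  shows "AE \<omega> in SS (slot_pmf pA pB). good u \<omega>"
proof -
  let ?P = "slot_pmf pA pB"
  have one: "AE \<omega> in SS ?P. \<exists>k\<ge>n. sp v (\<omega>!!k)" for n v
  proof -
    have q: "emeasure (measure_pmf ?P) {x. \<not> sp v x} = ennreal (1 - cc pA pB v)" "0 \<le> 1 - cc pA pB v" "1 - cc pA pB v < 1"
      using slot_not_sp[of pA pB v] cc_pos[of pA pB v] cc_le1[of pA pB v] assms by auto
    have "emeasure (SS ?P) {\<omega>. \<not> (\<exists>k\<ge>n. sp v (\<omega>!!k))} = (\<integral>\<^sup>+\<omega>. indicator {\<omega>. \<not> (\<exists>k\<ge>n. sp v (\<omega>!!k))} \<omega> \<partial>SS ?P)"
      by (subst nn_integral_indicator) (auto intro!: sets_SS_Collect)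
    also have "\<dots> = (\<integral>\<^sup>+\<omega>. (\<lambda>_. 1) (stake n \<omega>) * indicator {\<omega>. \<forall>k. \<not> sp v (\<omega>!!k)} (sdrop n \<omega>) \<partial>SS ?P)"
    proof (rule nn_integral_cong)
      fix \<omega> :: "(bool\<times>bool) stream"
      have e: "(\<not> (\<exists>k\<ge>n. sp v (\<omega>!!k))) \<longleftrightarrow> (\<forall>k. \<not> sp v (sdrop n \<omega> !! k))"
        unfolding sdrop_snth by (metis le_add1 le_add_diff_inverse)
      show "indicator {\<omega>. \<not> (\<exists>k\<ge>n. sp v (\<omega>!!k))} \<omega> = (\<lambda>_. 1::ennreal) (stake n \<omega>) * indicator {\<omega>. \<forall>k. \<not> sp v (\<omega>!!k)} (sdrop n \<omega>)"
        using e by (simp add: indicator_def)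
    qed
    also have "\<dots> = (\<integral>\<^sup>+\<omega>. 1 \<partial>SS ?P) * (\<integral>\<^sup>+\<omega>. indicator {\<omega>. \<forall>k. \<not> sp v (\<omega>!!k)} \<omega> \<partial>SS ?P)"
      by (rule K) (auto intro!: sets_SS_Collect)
    also have "\<dots> = emeasure (SS ?P) {\<omega>. \<forall>k. \<not> sp v (\<omega>!!k)}"
      by (subst nn_integral_indicator) (auto intro!: sets_SS_Collect)
    also have "\<dots> = 0" by (rule geo_never[OF q])
    finally have "emeasure (SS ?P) {\<omega>. \<not> (\<exists>k\<ge>n. sp v (\<omega>!!k))} = 0" .
    then show ?thesis
      by (subst AE_iff_measurable[OF _ refl]) (auto intro!: sets_SS_Collect)
  qed
  have "AE \<omega> in SS ?P. \<forall>n. (\<exists>k\<ge>n. sp u (\<omega>!!k)) \<and> (\<exists>k\<ge>n. sp (ou u) (\<omega>!!k))"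
    using one by (subst AE_all_countable) auto
  then show ?thesis unfolding good_def by auto
qed

lemma stopQ:
  assumes "AE \<omega> in SS P. good u \<omega>"
    and st: "\<And>\<omega> \<omega>'. good u \<omega> \<Longrightarrow> good u \<omega>' \<Longrightarrow> (\<And>k. k < \<tau> \<omega> \<Longrightarrow> \<omega>'!!k = \<omega>!!k) \<Longrightarrow> \<tau> \<omega>' = \<tau> \<omega>"
  shows "AE \<omega> in SS P. \<forall>n. (\<tau> \<omega> = n \<longleftrightarrow> stake n \<omega> \<in> stake n ` {\<omega>. good u \<omega> \<and> \<tau> \<omega> = n})"
  using assms(1)
proof eventually_elim
  case (elim \<omega>)
  show ?case
  proof (intro allI iffI)
    fix n assume "\<tau> \<omega> = n" then show "stake n \<omega> \<in> stake n ` {\<omega>. good u \<omega> \<and> \<tau> \<omega> = n}" using elim by auto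
  next
    fix n assume "stake n \<omega> \<in> stake n ` {\<omega>. good u \<omega> \<and> \<tau> \<omega> = n}"
    then obtain \<omega>'' where w: "good u \<omega>''" "\<tau> \<omega>'' = n" "stake n \<omega> = stake n \<omega>''" by auto
    have "\<tau> \<omega> = \<tau> \<omega>''"
      by (rule st[OF w(1) elim]) (use w stake_eq_nth in auto)
    then show "\<tau> \<omega> = n" using w by simp
  qed
qed



lemma meas_shift:
  assumes F: "F \<in> borel_measurable (SS P)" and t: "\<tau> \<in> measurable (SS P) (count_space UNIV)"
  shows "(\<lambda>\<omega>. F (sdrop (\<tau> \<omega>) \<omega>)) \<in> borel_measurable (SS P)"
proof (rule measurable_compose_countable'[where f="\<lambda>n \<omega>. F (sdrop n \<omega>)" and I=UNIV, OF _ t])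
  fix n :: nat
  show "(\<lambda>\<omega>. F (sdrop n \<omega>)) \<in> borel_measurable (SS P)"
    using measurable_compose[OF measurable_sdrop F] by (simp add: o_def)
qed simp

context
  fixes pA pB :: real
  assumes p: "0 < pA" "pA < 1" "0 < pB" "pB < 1"
begin

lemma E_geo: "(\<integral>\<^sup>+\<omega>. of_nat (Suc (LEAST k. sp v (\<omega>!!k))) \<partial>SS (slot_pmf pA pB)) = ennreal (1 / cc pA pB v)"
proof -
  have q: "emeasure (measure_pmf (slot_pmf pA pB)) {x. \<not> sp v x} = ennreal (1 - cc pA pB v)" "0 \<le> 1 - cc pA pB v" "1 - cc pA pB v < 1"
    using slot_not_sp[of pA pB v] cc_pos[of pA pB v] cc_le1[of pA pB v] p by auto
  show ?thesis using geo_mean[OF q] by simp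
qed

lemma E_hh: "(\<integral>\<^sup>+\<omega>. of_nat (Suc (hh u \<omega>)) \<partial>SS (slot_pmf pA pB)) = ennreal (1 / cc pA pB u) + ennreal (1 / cc pA pB (ou u))"
proof -
  let ?S = "SS (slot_pmf pA pB)"
  let ?F = "\<lambda>\<omega>'. of_nat (Suc (LEAST k. sp (ou u) (\<omega>'!!k))) :: ennreal"
  have mF: "?F \<in> borel_measurable ?S" by measurable
  have mt: "(\<lambda>\<omega>. Suc (t0 u \<omega>)) \<in> measurable ?S (count_space UNIV)" using meas_t0 by measurable
  have m1: "(\<lambda>\<omega>. of_nat (Suc (t0 u \<omega>)) :: ennreal) \<in> borel_measurable ?S" using meas_t0 by measurable
  have "(\<integral>\<^sup>+\<omega>. of_nat (Suc (hh u \<omega>)) \<partial>?S) = (\<integral>\<^sup>+\<omega>. (of_nat (Suc (t0 u \<omega>)) + ?F (sdrop (Suc (t0 u \<omega>)) \<omega>)) \<partial>?S)"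
  proof (rule nn_integral_cong_AE)
    show "AE \<omega> in ?S. of_nat (Suc (hh u \<omega>)) = of_nat (Suc (t0 u \<omega>)) + ?F (sdrop (Suc (t0 u \<omega>)) \<omega>)"
      using AE_good[OF p, of u]
    proof eventually_elim
      case (elim \<omega>)
      show ?case unfolding hh_split[OF elim] of_nat_add ..
    qed
  qed
  also have "\<dots> = (\<integral>\<^sup>+\<omega>. of_nat (Suc (t0 u \<omega>)) \<partial>?S) + (\<integral>\<^sup>+\<omega>. ?F (sdrop (Suc (t0 u \<omega>)) \<omega>) \<partial>?S)"
    by (rule nn_integral_add[OF m1 meas_shift[OF mF mt]])
  also have "(\<integral>\<^sup>+\<omega>. ?F (sdrop (Suc (t0 u \<omega>)) \<omega>) \<partial>?S) = (\<integral>\<^sup>+\<omega>. ?F \<omega> \<partial>?S)"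
  proof (rule SM[OF mF stopQ[OF AE_good[OF p]]])
    fix \<omega> \<omega>' assume g: "good u \<omega>" "good u \<omega>'" and eq: "\<And>k. k < Suc (t0 u \<omega>) \<Longrightarrow> \<omega>'!!k = \<omega>!!k"
    show "Suc (t0 u \<omega>') = Suc (t0 u \<omega>)" using t0_stop[OF g(1), of \<omega>'] eq by simp
  qed
  also have "(\<integral>\<^sup>+\<omega>. of_nat (Suc (t0 u \<omega>)) \<partial>?S) = ennreal (1 / cc pA pB u)"
    unfolding t0_def by (rule E_geo)
  also have "(\<integral>\<^sup>+\<omega>. ?F \<omega> \<partial>?S) = ennreal (1 / cc pA pB (ou u))"
    by (rule E_geo)
  finally show ?thesis .
qed

lemma E_g: "(\<integral>\<^sup>+\<omega>. of_nat (gfun u \<omega>) \<partial>SS (slot_pmf pA pB)) =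
   (\<integral>\<^sup>+\<omega>. of_nat (Suc (hh u \<omega>)) \<partial>SS (slot_pmf pA pB)) + (\<integral>\<^sup>+\<omega>. of_nat (first_refresh \<omega> u) \<partial>SS (slot_pmf pA pB))"
proof -
  let ?S = "SS (slot_pmf pA pB)"
  let ?F = "\<lambda>\<omega>'. of_nat (first_refresh \<omega>' u) :: ennreal"
  have mF: "?F \<in> borel_measurable ?S" using meas_f by measurable
  have mt: "(\<lambda>\<omega>. Suc (hh u \<omega>)) \<in> measurable ?S (count_space UNIV)" using meas_hh by measurable
  have m1: "(\<lambda>\<omega>. of_nat (Suc (hh u \<omega>)) :: ennreal) \<in> borel_measurable ?S" using meas_hh by measurable
  have "(\<integral>\<^sup>+\<omega>. of_nat (gfun u \<omega>) \<partial>?S) = (\<integral>\<^sup>+\<omega>. (of_nat (Suc (hh u \<omega>)) + ?F (sdrop (Suc (hh u \<omega>)) \<omega>)) \<partial>?S)"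
  proof (rule nn_integral_cong_AE)
    show "AE \<omega> in ?S. of_nat (gfun u \<omega>) = of_nat (Suc (hh u \<omega>)) + ?F (sdrop (Suc (hh u \<omega>)) \<omega>)"
      using AE_good[OF p, of u]
    proof eventually_elim
      case (elim \<omega>)
      show ?case unfolding gfun_def g_eq[OF elim] of_nat_add ..
    qed
  qed
  also have "\<dots> = (\<integral>\<^sup>+\<omega>. of_nat (Suc (hh u \<omega>)) \<partial>?S) + (\<integral>\<^sup>+\<omega>. ?F (sdrop (Suc (hh u \<omega>)) \<omega>) \<partial>?S)"
    by (rule nn_integral_add[OF m1 meas_shift[OF mF mt]])
  also have "(\<integral>\<^sup>+\<omega>. ?F (sdrop (Suc (hh u \<omega>)) \<omega>) \<partial>?S) = (\<integral>\<^sup>+\<omega>. ?F \<omega> \<partial>?S)"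
  proof (rule SM[OF mF stopQ[OF AE_good[OF p]]])
    fix \<omega> \<omega>' assume g: "good u \<omega>" "good u \<omega>'" and eq: "\<And>k. k < Suc (hh u \<omega>) \<Longrightarrow> \<omega>'!!k = \<omega>!!k"
    show "Suc (hh u \<omega>') = Suc (hh u \<omega>)" using hh_stop[OF g(1), of \<omega>'] eq by simp
  qed
  finally show ?thesis .
qed

lemma E_f_le: "(\<integral>\<^sup>+\<omega>. of_nat (first_refresh \<omega> u) \<partial>SS (slot_pmf pA pB)) \<le> (\<integral>\<^sup>+\<omega>. of_nat (Suc (hh u \<omega>)) \<partial>SS (slot_pmf pA pB))"
proof (rule nn_integral_mono_AE)
  show "AE \<omega> in SS (slot_pmf pA pB). (of_nat (first_refresh \<omega> u) :: ennreal) \<le> of_nat (Suc (hh u \<omega>))"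
    using AE_good[OF p, of u]
  proof eventually_elim
    case (elim \<omega>)
    have "first_refresh \<omega> u \<le> Suc (hh u \<omega>)" using f_lt_hh[OF elim] by simp
    then show ?case by (rule of_nat_mono)
  qed
qed

lemma E_gf: "(\<integral>\<^sup>+\<omega>. of_nat (gfun u \<omega>) \<partial>SS (slot_pmf pA pB)) =
   (\<integral>\<^sup>+\<omega>. of_nat (gfun u \<omega> - first_refresh \<omega> u) \<partial>SS (slot_pmf pA pB)) + (\<integral>\<^sup>+\<omega>. of_nat (first_refresh \<omega> u) \<partial>SS (slot_pmf pA pB))"
proof -
  let ?S = "SS (slot_pmf pA pB)"
  have m1: "(\<lambda>\<omega>. of_nat (gfun u \<omega> - first_refresh \<omega> u) :: ennreal) \<in> borel_measurable ?S" using meas_f meas_gfun by measurable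
  have m2: "(\<lambda>\<omega>. of_nat (first_refresh \<omega> u) :: ennreal) \<in> borel_measurable ?S" using meas_f by measurable
  have "(\<integral>\<^sup>+\<omega>. of_nat (gfun u \<omega>) \<partial>?S) = (\<integral>\<^sup>+\<omega>. (of_nat (gfun u \<omega> - first_refresh \<omega> u) + of_nat (first_refresh \<omega> u)) \<partial>?S)"
  proof (rule nn_integral_cong_AE)
    show "AE \<omega> in ?S. (of_nat (gfun u \<omega>) :: ennreal) = of_nat (gfun u \<omega> - first_refresh \<omega> u) + of_nat (first_refresh \<omega> u)"
      using AE_good[OF p, of u]
    proof eventually_elim
      case (elim \<omega>)
      have "first_refresh \<omega> u \<le> gfun u \<omega>" unfolding gfun_def g_eq[OF elim] using f_lt_hh[OF elim] by simp
      then show ?case by (simp flip: of_nat_add)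
    qed
  qed
  also have "\<dots> = (\<integral>\<^sup>+\<omega>. of_nat (gfun u \<omega> - first_refresh \<omega> u) \<partial>?S) + (\<integral>\<^sup>+\<omega>. of_nat (first_refresh \<omega> u) \<partial>?S)"
    by (rule nn_integral_add[OF m1 m2])
  finally show ?thesis .
qed

lemma E_main: "(\<integral>\<^sup>+\<omega>. of_nat (gfun u \<omega> - first_refresh \<omega> u) \<partial>SS (slot_pmf pA pB)) = ennreal (1 / cc pA pB u) + ennreal (1 / cc pA pB (ou u))"
proof -
  let ?S = "SS (slot_pmf pA pB)"
  have fin: "(\<integral>\<^sup>+\<omega>. of_nat (first_refresh \<omega> u) \<partial>?S) \<noteq> \<infinity>"
    using E_f_le[of u] unfolding E_hh by (auto simp: top_unique simp flip: ennreal_plus)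
  let ?X = "(\<integral>\<^sup>+\<omega>. of_nat (gfun u \<omega> - first_refresh \<omega> u) \<partial>?S)"
  let ?c = "(\<integral>\<^sup>+\<omega>. of_nat (first_refresh \<omega> u) \<partial>?S)"
  let ?Y = "ennreal (1 / cc pA pB u) + ennreal (1 / cc pA pB (ou u))"
  have a: "(\<integral>\<^sup>+\<omega>. of_nat (gfun u \<omega>) \<partial>?S) = ?X + ?c" by (rule E_gf)
  have b: "(\<integral>\<^sup>+\<omega>. of_nat (gfun u \<omega>) \<partial>?S) = ?Y + ?c" using E_g[of u] unfolding E_hh[of u] .
  have "?X + ?c = ?Y + ?c" using a b by (rule trans[OF sym])
  then have "?c + ?X = ?c + ?Y" by (simp add: add.commute)
  then show ?thesis using fin by (simp add: ennreal_add_left_cancel)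
qed

end



lemma integral_cycle:
  assumes p: "0 < pA" "pA < 1" "0 < pB" "pB < 1"
  shows "(\<integral>\<omega>. cycle_time T \<omega> u \<partial>aloha_space pA pB) = T * (1 / cc pA pB u + 1 / cc pA pB (ou u))"
proof -
  let ?S = "SS (slot_pmf pA pB)"
  have ct: "cycle_time T \<omega> u = T * real (gfun u \<omega> - first_refresh \<omega> u)" for \<omega>
    by (simp add: cycle_time_def gfun_def)
  have m: "(\<lambda>\<omega>. real (gfun u \<omega> - first_refresh \<omega> u)) \<in> borel_measurable ?S"
    using meas_f meas_gfun by measurable
  have "(\<integral>\<omega>. real (gfun u \<omega> - first_refresh \<omega> u) \<partial>?S) = enn2real (\<integral>\<^sup>+\<omega>. ennreal (real (gfun u \<omega> - first_refresh \<omega> u)) \<partial>?S)"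
    by (rule integral_eq_nn_integral[OF m]) auto
  also have "(\<integral>\<^sup>+\<omega>. ennreal (real (gfun u \<omega> - first_refresh \<omega> u)) \<partial>?S) = (\<integral>\<^sup>+\<omega>. of_nat (gfun u \<omega> - first_refresh \<omega> u) \<partial>?S)"
    by (simp add: ennreal_of_nat_eq_real_of_nat)
  also have "\<dots> = ennreal (1 / cc pA pB u) + ennreal (1 / cc pA pB (ou u))"
    by (rule E_main[OF p])
  finally have I0: "(\<integral>\<omega>. real (gfun u \<omega> - first_refresh \<omega> u) \<partial>?S) = enn2real (ennreal (1 / cc pA pB u) + ennreal (1 / cc pA pB (ou u)))" .
  have e: "ennreal (1 / cc pA pB u) + ennreal (1 / cc pA pB (ou u)) = ennreal (1 / cc pA pB u + 1 / cc pA pB (ou u))"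
    using cc_pos[OF p, of u] cc_pos[OF p, of "ou u"] by (simp add: ennreal_plus)
  have I: "(\<integral>\<omega>. real (gfun u \<omega> - first_refresh \<omega> u) \<partial>?S) = 1 / cc pA pB u + 1 / cc pA pB (ou u)"
  proof -
    have "enn2real (ennreal (1 / cc pA pB u + 1 / cc pA pB (ou u))) = 1 / cc pA pB u + 1 / cc pA pB (ou u)"
      using cc_pos[OF p, of u] cc_pos[OF p, of "ou u"] by (intro enn2real_ennreal) simp
    then show ?thesis using I0 unfolding e by simp
  qed
  have "(\<integral>\<omega>. cycle_time T \<omega> u \<partial>aloha_space pA pB) = (\<integral>\<omega>. T * real (gfun u \<omega> - first_refresh \<omega> u) \<partial>?S)"
    unfolding aloha_space_def ct ..
  also have "\<dots> = T * (\<integral>\<omega>. real (gfun u \<omega> - first_refresh \<omega> u) \<partial>?S)"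
    by (rule integral_mult_right_zero)
  finally show ?thesis unfolding I .
qed

lemma UNIV_user: "(UNIV :: user set) = {UA, UB}"
  using user.exhaust by auto

theorem theorem1:
  fixes pA pB T :: real
  assumes "0 < pA" "pA < 1" "0 < pB" "pB < 1" "0 < T"
  shows "channel_cycle_time pA pB T =
    ((1 - pA) * pB + (1 - pB) * pA) / ((1 - pA) * (1 - pB) * pA * pB) * T"
proof -
  have p: "0 < pA" "pA < 1" "0 < pB" "pB < 1" using assms by auto
  have "channel_cycle_time pA pB T = (T * (1 / cc pA pB UA + 1 / cc pA pB UB) + T * (1 / cc pA pB UB + 1 / cc pA pB UA)) / 2"
    unfolding channel_cycle_time_def UNIV_user
    using integral_cycle[OF p, of T UA] integral_cycle[OF p, of T UB] by simp
  also have "\<dots> = T * (1 / (pA * (1 - pB)) + 1 / (pB * (1 - pA)))" by simp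
  also have "\<dots> = ((1 - pA) * pB + (1 - pB) * pA) / ((1 - pA) * (1 - pB) * pA * pB) * T"
  proof -
    have nz: "pA \<noteq> 0" "pB \<noteq> 0" "1 - pA \<noteq> 0" "1 - pB \<noteq> 0" using p by auto
    show ?thesis using nz by (simp add: field_simps)
  qed
  finally show ?thesis .
qed


end
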